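(* Let $q_{ij}\in\mathbb{C}$ ($1\le i,j\le 4$) be $4$-th roots of unity with $q_{ii}=q_{ij}q_{ji}=1$ such that $\prod_{i=1}^4 q_{ij}$ is independent of $j$, and let $$A_4=\mathbb{C}\langle x_1,\dots,x_4\rangle\big/\Big(\textstyle\sum_{k=1}^4x_k^4,\ x_ix_j-q_{ij}x_jx_i\Big)_{i,j}$$ (so that $\mathrm{proj}(A_4)$ is a non-commutative Fermat quartic K3 surface). Then $\mathrm{Hilb}^1(A_4)$ is either a quartic K3 surface or $24$ distinct points. In particular its Euler number is $24$, independently of the values of the $q_{ij}$.
   Context: A $1$-point module over a graded algebra $A$ generated in degree $1$ is a cyclic graded right $A$-module generated in degree $0$ with Hilbert series $1/(1-t)$; $\mathrm{Hilb}^1(A)$ is the set (scheme) of isomorphism classes of such modules, identified as a subset of sequences of points of $\mathbb{P}^{3}$ via $m_ix_j=\xi_{i,j}m_{i+1}$, $[\xi_{i,1}:\dots:\xi_{i,4}]\in\mathbb{P}^3$. *)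

theory Defs
  imports "HOL-Analysis.Analysis"
begin

text \<open>Coordinates of \<open>\<complex>\<^sup>4\<close> are indexed by the numeral type \<open>4\<close>
  (standing for the indices 1..4 of the paper).\<close>

type_synonym cvec4 = "complex ^ 4"

definition proj_class :: "cvec4 \<Rightarrow> cvec4 set" where
  "proj_class v = {w. \<exists>c::complex. c \<noteq> 0 \<and> w = (\<chi> k. c * v $ k)}"

text \<open>A sequence of representatives \<open>\<xi>\<^sub>n\<close> defines a 1-point module over \<open>A\<^sub>4\<close>
  (via \<open>m\<^sub>n x\<^sub>j = \<xi>\<^sub>n\<^sub>,\<^sub>j m\<^sub>n\<^sub>+\<^sub>1\<close>) iff all defining relations of \<open>A\<^sub>4\<close> act as zero.\<close>
definition point_seq :: "(4 \<Rightarrow> 4 \<Rightarrow> complex) \<Rightarrow> (nat \<Rightarrow> cvec4) \<Rightarrow> bool" where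
  "point_seq q \<xi> \<longleftrightarrow>
     (\<forall>n. \<xi> n \<noteq> 0) \<and>
     (\<forall>n i j. \<xi> n $ i * \<xi> (Suc n) $ j - q i j * (\<xi> n $ j * \<xi> (Suc n) $ i) = 0) \<and>
     (\<forall>n. (\<Sum>k\<in>UNIV. \<xi> n $ k * \<xi> (n+1) $ k * \<xi> (n+2) $ k * \<xi> (n+3) $ k) = 0)"

definition Hilb1 :: "(4 \<Rightarrow> 4 \<Rightarrow> complex) \<Rightarrow> (nat \<Rightarrow> cvec4 set) set" where
  "Hilb1 q = {P. \<exists>\<xi>. point_seq q \<xi> \<and> (\<forall>n. P n = proj_class (\<xi> n))}"

text \<open>Homogeneous quartic forms in 4 variables, given by coefficients on exponent vectors.\<close>
definition quartic_monos :: "(4 \<Rightarrow> nat) set" where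
  "quartic_monos = {\<alpha>. sum \<alpha> UNIV = 4}"

definition quartic_eval :: "((4 \<Rightarrow> nat) \<Rightarrow> complex) \<Rightarrow> cvec4 \<Rightarrow> complex" where
  "quartic_eval c v = (\<Sum>\<alpha>\<in>quartic_monos. c \<alpha> * (\<Prod>k\<in>UNIV. v $ k ^ \<alpha> k))"

definition quartic_partial :: "((4 \<Rightarrow> nat) \<Rightarrow> complex) \<Rightarrow> 4 \<Rightarrow> cvec4 \<Rightarrow> complex" where
  "quartic_partial c l v = (\<Sum>\<alpha>\<in>quartic_monos. c \<alpha> * of_nat (\<alpha> l) *
      (\<Prod>k\<in>UNIV. v $ k ^ (if k = l then \<alpha> k - 1 else \<alpha> k)))"

text \<open>A smooth quartic surface in \<open>\<P>\<^sup>3\<close> (i.e. a quartic K3 surface): nonzero form with no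
  singular point.\<close>
definition smooth_quartic :: "((4 \<Rightarrow> nat) \<Rightarrow> complex) \<Rightarrow> bool" where
  "smooth_quartic c \<longleftrightarrow> (\<exists>\<alpha>\<in>quartic_monos. c \<alpha> \<noteq> 0) \<and>
     (\<forall>v. v \<noteq> 0 \<longrightarrow> quartic_eval c v = 0 \<longrightarrow> (\<exists>l. quartic_partial c l v \<noteq> 0))"

definition quartic_zero_set :: "((4 \<Rightarrow> nat) \<Rightarrow> complex) \<Rightarrow> cvec4 set set" where
  "quartic_zero_set c = {proj_class v | v. v \<noteq> 0 \<and> quartic_eval c v = 0}"

end

theory Submission
  imports Defs
begin



lemma proj_class_scale:
  assumes "a \<noteq> 0" shows "proj_class (a *s w) = proj_class w"
proof
  show "proj_class (a *s w) \<subseteq> proj_class w"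
  proof
    fix x assume "x \<in> proj_class (a *s w)"
    then obtain c where c: "c \<noteq> 0" "x = (\<chi> k. c * (a *s w) $ k)" unfolding proj_class_def by blast
    have "x = (\<chi> k. (c*a) * w $ k)" using c by (simp add: vec_eq_iff mult.assoc)
    moreover have "c * a \<noteq> 0" using c assms by simp
    ultimately show "x \<in> proj_class w" unfolding proj_class_def by blast
  qed
  show "proj_class w \<subseteq> proj_class (a *s w)"
  proof
    fix x assume "x \<in> proj_class w"
    then obtain c where c: "c \<noteq> 0" "x = (\<chi> k. c * w $ k)" unfolding proj_class_def by blast
    have "x = (\<chi> k. (c/a) * (a *s w) $ k)" using c assms by (simp add: vec_eq_iff)
    moreover have "c / a \<noteq> 0" using c assms by simp
    ultimately show "x \<in> proj_class (a *s w)" unfolding proj_class_def by blast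
  qed
qed

lemma proj_class_self: "w \<in> proj_class w"
  unfolding proj_class_def by (intro CollectI exI[of _ 1]) (auto simp: vec_eq_iff)

lemma proj_class_eqD:
  assumes "proj_class v = proj_class w" shows "\<exists>c. c \<noteq> 0 \<and> w = c *s v"
proof -
  have "w \<in> proj_class v" using assms proj_class_self by auto
  then obtain c where "c \<noteq> 0" "w = (\<chi> k. c * v $ k)" unfolding proj_class_def by blast
  moreover have "(\<chi> k. c * v $ k) = c *s v" by (simp add: vec_eq_iff)
  ultimately show ?thesis by blast
qed

lemma ps_nz: "point_seq q \<xi> \<Longrightarrow> \<xi> n \<noteq> 0" unfolding point_seq_def by blast
lemma ps_rel: assumes "point_seq q \<xi>" shows "\<xi> n $ i * \<xi> (Suc n) $ j = q i j * (\<xi> n $ j * \<xi> (Suc n) $ i)"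
proof -
  have "\<xi> n $ i * \<xi> (Suc n) $ j - q i j * (\<xi> n $ j * \<xi> (Suc n) $ i) = 0"
    using assms unfolding point_seq_def by blast
  then show ?thesis by simp
qed
lemma ps_quart: "point_seq q \<xi> \<Longrightarrow> (\<Sum>k\<in>UNIV. \<xi> n $ k * \<xi> (n+1) $ k * \<xi> (n+2) $ k * \<xi> (n+3) $ k) = 0"
  unfolding point_seq_def by blast

lemma supp_step:
  assumes ps: "point_seq q \<xi>" shows "\<xi> (Suc n) $ i \<noteq> 0 \<longleftrightarrow> \<xi> n $ i \<noteq> 0"
proof
  assume a: "\<xi> (Suc n) $ i \<noteq> 0"
  show "\<xi> n $ i \<noteq> 0"
  proof
    assume z: "\<xi> n $ i = 0"
    have "\<xi> n $ j = 0" for j using ps_rel[OF ps, of n j i] z a by simp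
    then have "\<xi> n = 0" by (simp add: vec_eq_iff)
    with ps_nz[OF ps] show False by blast
  qed
next
  assume a: "\<xi> n $ i \<noteq> 0"
  show "\<xi> (Suc n) $ i \<noteq> 0"
  proof
    assume z: "\<xi> (Suc n) $ i = 0"
    have "\<xi> (Suc n) $ j = 0" for j using ps_rel[OF ps, of n i j] z a by simp
    then have "\<xi> (Suc n) = 0" by (simp add: vec_eq_iff)
    with ps_nz[OF ps] show False by blast
  qed
qed

lemma supp_const:
  assumes ps: "point_seq q \<xi>" shows "\<xi> n $ i \<noteq> 0 \<longleftrightarrow> \<xi> 0 $ i \<noteq> 0"
  by (induction n) (use supp_step[OF ps] in auto)

lemma formula:
  assumes ps: "point_seq q \<xi>" and nz: "\<xi> 0 $ i \<noteq> 0"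
  shows "\<xi> n $ j = q i j ^ n * (\<xi> 0 $ j / \<xi> 0 $ i) * \<xi> n $ i"
proof (induction n)
  case 0 then show ?case using nz by simp
next
  case (Suc n)
  have nzn: "\<xi> n $ i \<noteq> 0" using supp_const[OF ps] nz by blast
  have "\<xi> (Suc n) $ j = q i j * \<xi> n $ j * \<xi> (Suc n) $ i / \<xi> n $ i"
    using ps_rel[OF ps, of n i j] nzn by (simp add: field_simps)
  also have "\<dots> = q i j ^ Suc n * (\<xi> 0 $ j / \<xi> 0 $ i) * \<xi> (Suc n) $ i"
    using Suc nzn by (simp add: field_simps)
  finally show ?case .
qed



lemma vec_formula:
  assumes ps: "point_seq q \<xi>" and nz: "\<xi> 0 $ i \<noteq> 0"
  shows "\<xi> n = (\<xi> n $ i / \<xi> 0 $ i) *s (\<chi> j. q i j ^ n * \<xi> 0 $ j)"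
proof -
  have "\<xi> n $ j = ((\<xi> n $ i / \<xi> 0 $ i) *s (\<chi> j. q i j ^ n * \<xi> 0 $ j)) $ j" for j
  proof -
    have "\<xi> n $ j = q i j ^ n * (\<xi> 0 $ j / \<xi> 0 $ i) * \<xi> n $ i" by (rule formula[OF ps nz])
    also have "\<dots> = ((\<xi> n $ i / \<xi> 0 $ i) *s (\<chi> j. q i j ^ n * \<xi> 0 $ j)) $ j" by simp
    finally show ?thesis .
  qed
  then show ?thesis by (subst vec_eq_iff) blast
qed

lemma P_formula:
  assumes ps: "point_seq q \<xi>" and nz: "\<xi> 0 $ i \<noteq> 0"
  shows "proj_class (\<xi> n) = proj_class (\<chi> j. q i j ^ n * \<xi> 0 $ j)"
proof -
  have "\<xi> n $ i \<noteq> 0" using supp_const[OF ps, of n i] nz by blast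
  then have "\<xi> n $ i / \<xi> 0 $ i \<noteq> 0" using nz by simp
  have e: "\<xi> n = (\<xi> n $ i / \<xi> 0 $ i) *s (\<chi> j. q i j ^ n * \<xi> 0 $ j)" by (rule vec_formula[OF ps nz])
  show ?thesis by (subst e) (rule proj_class_scale[OF \<open>\<xi> n $ i / \<xi> 0 $ i \<noteq> 0\<close>])
qed

lemma exists_nz: "(v::cvec4) \<noteq> 0 \<Longrightarrow> \<exists>i. v $ i \<noteq> 0"
  by (simp add: vec_eq_iff)

lemma inj_hilb: "inj_on (\<lambda>P. P 0) (Hilb1 q)"
proof (rule inj_onI)
  fix P P' assume PH: "P \<in> Hilb1 q" "P' \<in> Hilb1 q" and eq0: "P 0 = P' 0"
  obtain \<xi> where ps: "point_seq q \<xi>" "\<forall>n. P n = proj_class (\<xi> n)"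
    using PH(1) unfolding Hilb1_def by blast
  obtain \<xi>' where ps': "point_seq q \<xi>'" "\<forall>n. P' n = proj_class (\<xi>' n)"
    using PH(2) unfolding Hilb1_def by blast
  have "proj_class (\<xi> 0) = proj_class (\<xi>' 0)" using eq0 ps(2) ps'(2) by simp
  then obtain c where c: "c\<noteq>0" "\<xi>' 0 = c *s \<xi> 0" using proj_class_eqD by blast
  obtain i where i: "\<xi> 0 $ i \<noteq> 0" using ps_nz[OF ps(1), of 0] exists_nz by blast
  have i': "\<xi>' 0 $ i \<noteq> 0" using c i by simp
  show "P = P'"
  proof
    fix n
    have "P n = proj_class (\<chi> j. q i j ^ n * \<xi> 0 $ j)" using P_formula[OF ps(1) i] ps(2) by simp
    also have "\<dots> = proj_class (c *s (\<chi> j. q i j ^ n * \<xi> 0 $ j))" using proj_class_scale c(1) by simp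
    also have "c *s (\<chi> j. q i j ^ n * \<xi> 0 $ j) = (\<chi> j. q i j ^ n * \<xi>' 0 $ j)"
      using c by (simp add: vec_eq_iff)
    also have "proj_class (\<chi> j. q i j ^ n * \<xi>' 0 $ j) = P' n"
      using P_formula[OF ps'(1) i'] ps'(2) by simp
    finally show "P n = P' n" .
  qed
qed

definition e4 :: "4 \<Rightarrow> 4 \<Rightarrow> nat" where "e4 k = (\<lambda>l. if l = k then 4 else 0)"

definition cA :: "(4 \<Rightarrow> complex) \<Rightarrow> (4 \<Rightarrow> nat) \<Rightarrow> complex" where
  "cA w \<alpha> = (\<Sum>k\<in>UNIV. if \<alpha> = e4 k then w k else 0)"

lemma finite_monos: "finite quartic_monos"
proof -
  have "quartic_monos \<subseteq> Pi\<^sub>E UNIV (\<lambda>_. {..4::nat})"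
  proof
    fix \<alpha> assume "\<alpha> \<in> quartic_monos"
    then have "sum \<alpha> UNIV = 4" unfolding quartic_monos_def by simp
    then have "\<alpha> k \<le> 4" for k using member_le_sum[of k UNIV \<alpha>] by simp
    then show "\<alpha> \<in> Pi\<^sub>E UNIV (\<lambda>_. {..4::nat})" by (simp add: PiE_UNIV_domain)
  qed
  moreover have "finite (Pi\<^sub>E (UNIV::4 set) (\<lambda>_. {..4::nat}))" by (rule finite_PiE) auto
  ultimately show ?thesis by (rule finite_subset)
qed

lemma e4_mono: "e4 k \<in> quartic_monos"
  unfolding quartic_monos_def e4_def by simp

lemma e4_inj: "e4 a = e4 b \<longleftrightarrow> a = b"
proof
  assume "e4 a = e4 b"
  then have "e4 a a = e4 b a" by simp
  then show "a = b" unfolding e4_def by (simp split: if_splits)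
qed simp

lemma prod_e4: "(\<Prod>l\<in>UNIV. (v::cvec4) $ l ^ e4 k l) = v $ k ^ 4"
proof -
  have "(\<Prod>l\<in>UNIV. v $ l ^ e4 k l) = (\<Prod>l\<in>UNIV. if l = k then v $ l ^ 4 else 1)"
    by (rule prod.cong) (auto simp: e4_def)
  then show ?thesis by simp
qed

lemma sum_if_mult: "(\<Sum>k\<in>A. if P k then a k else 0) * (X::complex) = (\<Sum>k\<in>A. if P k then a k * X else 0)"
  unfolding sum_distrib_right by (rule sum.cong) auto

lemma eval_cA: "quartic_eval (cA w) v = (\<Sum>k\<in>UNIV. w k * v $ k ^ 4)"
proof -
  have "quartic_eval (cA w) v = (\<Sum>\<alpha>\<in>quartic_monos. \<Sum>k\<in>UNIV.
           (if \<alpha> = e4 k then w k * (\<Prod>l\<in>UNIV. v $ l ^ \<alpha> l) else 0))"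
    unfolding quartic_eval_def cA_def by (rule sum.cong) (simp_all add: sum_if_mult)
  also have "\<dots> = (\<Sum>k\<in>UNIV. \<Sum>\<alpha>\<in>quartic_monos.
           (if \<alpha> = e4 k then w k * (\<Prod>l\<in>UNIV. v $ l ^ \<alpha> l) else 0))"
    by (rule sum.swap)
  also have "\<dots> = (\<Sum>k\<in>UNIV. w k * (\<Prod>l\<in>UNIV. v $ l ^ e4 k l))"
    using finite_monos e4_mono by simp
  also have "\<dots> = (\<Sum>k\<in>UNIV. w k * v $ k ^ 4)" by (simp add: prod_e4)
  finally show ?thesis .
qed

lemma partial_term: "of_nat (e4 k l) * (\<Prod>m\<in>UNIV. (v::cvec4) $ m ^ (if m = l then e4 k m - 1 else e4 k m))
   = (if k = l then 4 * v $ l ^ 3 else 0)"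
proof (cases "k = l")
  case True
  have "(\<Prod>m\<in>UNIV. v $ m ^ (if m = l then e4 k m - 1 else e4 k m)) = (\<Prod>m\<in>UNIV. if m = l then v $ m ^ 3 else 1)"
    by (rule prod.cong) (auto simp: e4_def True)
  then show ?thesis using True by (simp add: e4_def)
next
  case False then show ?thesis by (simp add: e4_def)
qed

lemma partial_cA: "quartic_partial (cA w) l v = 4 * w l * v $ l ^ 3"
proof -
  have "quartic_partial (cA w) l v = (\<Sum>\<alpha>\<in>quartic_monos. \<Sum>k\<in>UNIV.
           (if \<alpha> = e4 k then w k * (of_nat (\<alpha> l) *
              (\<Prod>m\<in>UNIV. v $ m ^ (if m = l then \<alpha> m - 1 else \<alpha> m))) else 0))"
    unfolding quartic_partial_def cA_def by (rule sum.cong) (simp_all only: sum_if_mult mult.assoc)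
  also have "\<dots> = (\<Sum>k\<in>UNIV. \<Sum>\<alpha>\<in>quartic_monos.
           (if \<alpha> = e4 k then w k * (of_nat (\<alpha> l) *
              (\<Prod>m\<in>UNIV. v $ m ^ (if m = l then \<alpha> m - 1 else \<alpha> m))) else 0))"
    by (rule sum.swap)
  also have "\<dots> = (\<Sum>k\<in>UNIV. w k * (of_nat (e4 k l) *
              (\<Prod>m\<in>UNIV. v $ m ^ (if m = l then e4 k m - 1 else e4 k m))))"
    using finite_monos e4_mono by simp
  also have "\<dots> = (\<Sum>k\<in>UNIV. if k = l then w l * (4 * v $ l ^ 3) else 0)"
    by (rule sum.cong) (auto simp: partial_term)
  finally show ?thesis by simp
qed

lemma smooth_cA:
  assumes "\<forall>k. w k \<noteq> 0" shows "smooth_quartic (cA w)"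
  unfolding smooth_quartic_def
proof
  have "cA w (e4 1) = w 1" unfolding cA_def by (simp add: e4_inj)
  then show "\<exists>\<alpha>\<in>quartic_monos. cA w \<alpha> \<noteq> 0" using e4_mono assms by metis
  show "\<forall>v. v \<noteq> 0 \<longrightarrow> quartic_eval (cA w) v = 0 \<longrightarrow> (\<exists>l. quartic_partial (cA w) l v \<noteq> 0)"
  proof (intro allI impI)
    fix v :: cvec4 assume "v \<noteq> 0"
    then obtain l where "v $ l \<noteq> 0" using exists_nz by blast
    then have "quartic_partial (cA w) l v \<noteq> 0" using assms by (simp add: partial_cA)
    then show "\<exists>l. quartic_partial (cA w) l v \<noteq> 0" by blast
  qed
qed



lemma pow4_prod: assumes "(a::complex)^4 = 1"
  shows "a^n * a^(n+1) * a^(n+2) * a^(n+3) = a^2"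
proof -
  have "a^n * a^(n+1) * a^(n+2) * a^(n+3) = a^(n + (n+1) + (n+2) + (n+3))"
    by (simp only: power_add)
  also have "n + (n+1) + (n+2) + (n+3) = 4*n + 4 + 2" by simp
  also have "a^(4*n + 4 + 2) = (a^4)^n * a^4 * a^2" by (simp only: power_add power_mult)
  finally show ?thesis using assms by simp
qed

lemma pow6: assumes "(a::complex)^4 = 1" shows "a^6 = a^2"
proof -
  have "a^6 = a^4 * a^2" by (simp add: power_add[symmetric])
  then show ?thesis using assms by simp
qed

lemma nz4: "(a::complex)^4 = 1 \<Longrightarrow> a \<noteq> 0" by auto

lemma q6: fixes a b c :: complex
  assumes "a = b * c" "b^4 = 1" "c^4=1" shows "a ^ 6 = c^2 * b^2"
proof -
  have "a^6 = b^6 * c^6" using assms(1) by (simp add: power_mult_distrib)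
  also have "b^6 = b^4 * b^2" by (simp add: power_add[symmetric])
  also have "c^6 = c^4 * c^2" by (simp add: power_add[symmetric])
  finally show ?thesis using assms by simp
qed

lemma tm_alg: fixes a0 a1 a2 a3 x Q :: complex assumes "a0 \<noteq> 0"
  shows "x * (Q^1*(x/a0)*a1) * (Q^2*(x/a0)*a2) * (Q^3*(x/a0)*a3) = Q^6 * (x^4 * (a1*a2*a3/a0^3))"
proof -
  have "x * (Q^1*(x/a0)*a1) * (Q^2*(x/a0)*a2) * (Q^3*(x/a0)*a3) = (Q^1*Q^2*Q^3) * (x * x * x * x) * (a1*a2*a3) / (a0*a0*a0)"
    by (simp add: field_simps)
  also have "Q^1*Q^2*Q^3 = Q^(1+2+3)" by (simp only: power_add)
  also have "(1::nat)+2+3 = 6" by simp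
  also have "x*x*x*x = x^4" by (simp add: eval_nat_numeral)
  also have "a0*a0*a0 = a0^3" by (simp add: eval_nat_numeral)
  finally show ?thesis by simp
qed

lemma relA:
  fixes v :: cvec4 and q :: "4 \<Rightarrow> 4 \<Rightarrow> complex"
  assumes r: "q i j * q 1 i = q 1 j"
  shows "(\<chi> k. q 1 k ^ n * v $ k) $ i * (\<chi> k. q 1 k ^ Suc n * v $ k) $ j
     - q i j * ((\<chi> k. q 1 k ^ n * v $ k) $ j * (\<chi> k. q 1 k ^ Suc n * v $ k) $ i) = 0"
proof -
  have a: "(\<chi> k. q 1 k ^ n * v $ k) $ i * (\<chi> k. q 1 k ^ Suc n * v $ k) $ j = q 1 i ^ n * q 1 j ^ n * q 1 j * (v$i * v$j)"
    by (simp add: mult_ac)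
  have b: "q i j * ((\<chi> k. q 1 k ^ n * v $ k) $ j * (\<chi> k. q 1 k ^ Suc n * v $ k) $ i) = q 1 i ^ n * q 1 j ^ n * (q i j * q 1 i) * (v$i * v$j)"
    by (simp add: mult_ac)
  show ?thesis unfolding a b r by simp
qed

lemma caseA_sub:
  assumes q4: "\<forall>i j. q i j ^ 4 = 1" and qd: "\<forall>i. q i i = 1" and qinv: "\<forall>i j. q i j * q j i = 1"
    and cons: "\<forall>i j. q i j = q 1 j * q i 1"
  shows "(\<lambda>P. P 0) ` Hilb1 q \<subseteq> quartic_zero_set (cA (\<lambda>k. q 1 k ^ 2))"
proof
    fix x assume "x \<in> (\<lambda>P. P 0) ` Hilb1 q"
    then obtain \<xi> where ps: "point_seq q \<xi>" and x: "x = proj_class (\<xi> 0)" unfolding Hilb1_def by auto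
    obtain i where i: "\<xi> 0 $ i \<noteq> 0" using ps_nz[OF ps, of 0] exists_nz by blast
    define C where "C = \<xi> 1 $ i * \<xi> 2 $ i * \<xi> 3 $ i / \<xi> 0 $ i ^ 3"
    have C: "C \<noteq> 0" using supp_const[OF ps, of 1 i] supp_const[OF ps, of 2 i] supp_const[OF ps, of 3 i] i
      by (simp add: C_def)
    have qi1: "q i 1 \<noteq> 0" using q4 nz4 by blast
    have tm: "\<xi> 0 $ k * \<xi> 1 $ k * \<xi> 2 $ k * \<xi> 3 $ k = (C * q i 1 ^ 2) * (q 1 k ^ 2 * \<xi> 0 $ k ^ 4)" for k
    proof -
      have f1: "\<xi> 1 $ k = q i k ^ 1 * (\<xi> 0 $ k / \<xi> 0 $ i) * \<xi> 1 $ i" by (rule formula[OF ps i])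
      have f2: "\<xi> 2 $ k = q i k ^ 2 * (\<xi> 0 $ k / \<xi> 0 $ i) * \<xi> 2 $ i" by (rule formula[OF ps i])
      have f3: "\<xi> 3 $ k = q i k ^ 3 * (\<xi> 0 $ k / \<xi> 0 $ i) * \<xi> 3 $ i" by (rule formula[OF ps i])
      have "\<xi> 0 $ k * \<xi> 1 $ k * \<xi> 2 $ k * \<xi> 3 $ k = q i k ^ 6 * (\<xi> 0 $ k ^ 4 * (\<xi> 1 $ i * \<xi> 2 $ i * \<xi> 3 $ i / \<xi> 0 $ i ^ 3))"
        unfolding f1 f2 f3 by (rule tm_alg[OF i])
      also have "q i k ^ 6 = q i 1 ^ 2 * q 1 k ^ 2"
        by (rule q6[OF cons[rule_format, of i k]]) (use q4 in blast)+
      finally show ?thesis by (simp add: C_def mult_ac)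
    qed
    have "0 = (\<Sum>k\<in>UNIV. \<xi> 0 $ k * \<xi> 1 $ k * \<xi> 2 $ k * \<xi> 3 $ k)"
      using ps_quart[OF ps, of 0] unfolding add_0 by (rule sym)
    also have "\<dots> = (C * q i 1 ^ 2) * (\<Sum>k\<in>UNIV. q 1 k ^ 2 * \<xi> 0 $ k ^ 4)"
      unfolding sum_distrib_left by (rule sum.cong[OF refl tm])
    finally have "(\<Sum>k\<in>UNIV. q 1 k ^ 2 * \<xi> 0 $ k ^ 4) = 0" using C qi1 by simp
    then have "quartic_eval (cA (\<lambda>k. q 1 k ^ 2)) (\<xi> 0) = 0" by (simp add: eval_cA)
    then show "x \<in> quartic_zero_set (cA (\<lambda>k. q 1 k ^ 2))"
      unfolding quartic_zero_set_def using x ps_nz[OF ps] by blast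
  qed

lemma quart_term: fixes a b c d v :: complex
  shows "(a * v) * (b * v) * (c * v) * (d * v) = (a * b * c * d) * v ^ 4"
  by (simp add: power4_eq_xxxx mult_ac)

lemma caseA_sup:
  assumes q4: "\<forall>i j. q i j ^ 4 = 1" and qd: "\<forall>i. q i i = 1" and qinv: "\<forall>i j. q i j * q j i = 1"
    and cons: "\<forall>i j. q i j = q 1 j * q i 1"
  shows "quartic_zero_set (cA (\<lambda>k. q 1 k ^ 2)) \<subseteq> (\<lambda>P. P 0) ` Hilb1 q"
proof
    fix x assume "x \<in> quartic_zero_set (cA (\<lambda>k. q 1 k ^ 2))"
    then obtain v where v: "v \<noteq> 0" "quartic_eval (cA (\<lambda>k. q 1 k ^ 2)) v = 0" "x = proj_class v"
      unfolding quartic_zero_set_def by blast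
    have vq: "(\<Sum>k\<in>UNIV. q 1 k ^ 2 * v $ k ^ 4) = 0" using v(2) by (simp add: eval_cA)
    define \<xi> where "\<xi> n = (\<chi> k. q 1 k ^ n * v $ k)" for n
    have ps: "point_seq q \<xi>" unfolding point_seq_def
    proof (intro conjI allI)
      fix n
      obtain k where k: "v $ k \<noteq> 0" using v(1) exists_nz by blast
      have "q 1 k \<noteq> 0" using q4 nz4 by blast
      then have "\<xi> n $ k \<noteq> 0" using k by (simp add: \<xi>_def)
      then show "\<xi> n \<noteq> 0" by auto
    next
      fix n i j
      have r: "q i j * q 1 i = q 1 j"
      proof -
        have "q i j * q 1 i = q 1 j * (q i 1 * q 1 i)" using cons[rule_format, of i j] by (simp add: mult.assoc)
        then show ?thesis using qinv[rule_format, of i 1] by simp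
      qed
      show "\<xi> n $ i * \<xi> (Suc n) $ j - q i j * (\<xi> n $ j * \<xi> (Suc n) $ i) = 0"
        unfolding \<xi>_def by (rule relA[OF r])
    next
      fix n
      have "(\<Sum>k\<in>UNIV. \<xi> n $ k * \<xi> (n + 1) $ k * \<xi> (n + 2) $ k * \<xi> (n + 3) $ k)
          = (\<Sum>k\<in>UNIV. (q 1 k ^ n * q 1 k ^ (n+1) * q 1 k ^ (n+2) * q 1 k ^ (n+3)) * v $ k ^ 4)"
        unfolding \<xi>_def by (rule sum.cong[OF refl]) (simp only: vec_lambda_beta quart_term)
      also have "\<dots> = (\<Sum>k\<in>UNIV. q 1 k ^ 2 * v $ k ^ 4)"
        by (rule sum.cong[OF refl]) (simp only: pow4_prod[OF q4[rule_format]])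
      finally show "(\<Sum>k\<in>UNIV. \<xi> n $ k * \<xi> (n + 1) $ k * \<xi> (n + 2) $ k * \<xi> (n + 3) $ k) = 0"
        using vq by simp
    qed
    have "\<xi> 0 = v" by (simp add: \<xi>_def vec_eq_iff)
    have H: "(\<lambda>n. proj_class (\<xi> n)) \<in> Hilb1 q"
      unfolding Hilb1_def by (rule CollectI, rule exI[of _ \<xi>]) (simp add: ps)
    have X: "x = (\<lambda>n. proj_class (\<xi> n)) 0"
      using v(3) \<open>\<xi> 0 = v\<close> by simp
    show "x \<in> (\<lambda>P. P 0) ` Hilb1 q" using H X by (intro image_eqI[where f="\<lambda>P. P 0" and x="\<lambda>n. proj_class (\<xi> n)"]) simp_all
qed


lemma caseA:
  assumes q4: "\<forall>i j. q i j ^ 4 = 1" and qd: "\<forall>i. q i i = 1" and qinv: "\<forall>i j. q i j * q j i = 1"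
    and cons: "\<forall>i j. q i j = q 1 j * q i 1"
  shows "(\<lambda>P. P 0) ` Hilb1 q = quartic_zero_set (cA (\<lambda>k. q 1 k ^ 2))"
  using caseA_sub[OF assms] caseA_sup[OF assms] by (rule equalityI)



lemma alg1: fixes A B K A' B' J X Y :: complex
  assumes "A*B*K = A'*B'*J" "K*J = 1" "X*A' = 1" "Y*B' = 1" "J^4 = 1" shows "A*J*X*(B*J*Y) = 1"
  using assms by algebra
lemma alg2: fixes a b c d e :: complex
  assumes "a*b*c = 1" "d * c = 1" "e * a = 1" shows "b = d * e"
  using assms by algebra

definition U :: "(4 \<Rightarrow> 4 \<Rightarrow> complex) \<Rightarrow> 4 \<Rightarrow> 4 \<Rightarrow> 4 \<Rightarrow> bool" where
  "U q x y z \<longleftrightarrow> q x y * q y z * q z x = 1"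

lemma U_cyc: "U q x y z \<Longrightarrow> U q y z x" unfolding U_def by (simp add: mult_ac)

lemma U_swap: assumes qinv: "\<forall>i j. q i j * q j i = 1" and "U q x y z" shows "U q y x z"
proof -
  have a: "q x y * q y x = 1" "q y z * q z y = 1" "q z x * q x z = 1" using qinv by blast+
  have b: "q x y * q y z * q z x = 1" using assms(2) unfolding U_def .
  show ?thesis unfolding U_def using a b by algebra
qed

lemma U_all6: assumes qinv: "\<forall>i j. q i j * q j i = 1" and "U q a b c"
  shows "U q a b c \<and> U q b c a \<and> U q c a b \<and> U q b a c \<and> U q a c b \<and> U q c b a"
  using assms U_cyc U_swap[OF qinv] by meson

lemma univ4: assumes "distinct [a,b,c,d::4]" shows "UNIV = {a,b,c,d}"
proof -
  have "card {a,b,c,d} = 4" using assms by simp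
  then have "card {a,b,c,d} = card (UNIV :: 4 set)" by simp
  then have "{a,b,c,d} = UNIV" using card_subset_eq[of "UNIV::4 set" "{a,b,c,d}"] by simp
  then show ?thesis by simp
qed

lemma fourth: assumes "distinct [a,b,c::4]" obtains d where "distinct [a,b,c,d]"
proof -
  have c3: "card {a,b,c} = 3" using assms by simp
  have "{a,b,c} \<noteq> UNIV"
  proof
    assume "{a,b,c} = UNIV"
    then have "card (UNIV::4 set) = 3" using c3 by simp
    then show False by simp
  qed
  then obtain d where "d \<notin> {a,b,c}" by blast
  then show thesis using assms by (intro that) auto
qed

lemma u_pair:
  fixes q :: "4 \<Rightarrow> 4 \<Rightarrow> complex"
  assumes q4: "\<forall>i j. q i j ^ 4 = 1" and qd: "\<forall>i. q i i = 1" and qinv: "\<forall>i j. q i j * q j i = 1"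
    and col: "\<forall>j j'. (\<Prod>i\<in>UNIV. q i j) = (\<Prod>i\<in>UNIV. q i j')"
    and d: "distinct [a,b,j,k::4]"
  shows "q a j * q j k * q k a * (q b j * q j k * q k b) = 1"
proof -
  have U: "UNIV = {a,b,j,k}" by (rule univ4[OF d])
  have "(\<Prod>i\<in>UNIV. q i j) = (\<Prod>i\<in>UNIV. q i k)" using col by blast
  then have e: "q a j * (q b j * (q j j * q k j)) = q a k * (q b k * (q j k * q k k))"
    unfolding U using d by simp
  have jj: "q j j = 1" "q k k = 1" using qd by blast+
  have inv: "q k j * q j k = 1" "q k a * q a k = 1" "q k b * q b k = 1" using qinv by blast+
  have J: "q j k ^ 4 = 1" using q4 by blast
  have e': "q a j * q b j * q k j = q a k * q b k * q j k" using e jj by (simp add: mult.assoc)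
  show ?thesis by (rule alg1[OF e' inv J])
qed

lemma dich:
  fixes q :: "4 \<Rightarrow> 4 \<Rightarrow> complex"
  assumes q4: "\<forall>i j. q i j ^ 4 = 1" and qd: "\<forall>i. q i i = 1" and qinv: "\<forall>i j. q i j * q j i = 1"
    and col: "\<forall>j j'. (\<Prod>i\<in>UNIV. q i j) = (\<Prod>i\<in>UNIV. q i j')"
  shows "(\<forall>i j. q i j = q 1 j * q i 1) \<or> (\<forall>i j k. distinct [i,j,k] \<longrightarrow> \<not> U q i j k)"
proof (cases "\<exists>i j k. distinct [i,j,k] \<and> U q i j k")
  case False then show ?thesis by blast
next
  case True
  then obtain i j k where ijk: "distinct [i,j,k]" "U q i j k" by blast
  obtain l where l: "distinct [i,j,k,l]" using fourth[OF ijk(1)] by blast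
  have b1: "U q l j k"
    using u_pair[OF q4 qd qinv col, of i l j k] l ijk(2) unfolding U_def by auto
  have "U q j k i" using U_cyc ijk(2) by blast
  then have b2: "U q l k i"
    using u_pair[OF q4 qd qinv col, of j l k i] l unfolding U_def by auto
  have "U q k i j" using U_cyc \<open>U q j k i\<close> by blast
  then have b3: "U q l i j"
    using u_pair[OF q4 qd qinv col, of k l i j] l unfolding U_def by auto
  have all: "U q x y z" if "distinct [x,y,z]" for x y z
  proof -
    have UN: "UNIV = {i,j,k,l}" by (rule univ4[OF l])
    have mem: "x \<in> {i,j,k,l}" "y \<in> {i,j,k,l}" "z \<in> {i,j,k,l}" unfolding UN[symmetric] by simp_all
    note f = U_all6[OF qinv ijk(2)] U_all6[OF qinv b1] U_all6[OF qinv b2] U_all6[OF qinv b3]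
    show ?thesis using mem that f l by auto
  qed
  have "q x y = q 1 y * q x 1" for x y
  proof (cases "distinct [1,x,y]")
    case True
    then have "U q 1 x y" using all by blast
    then have e: "q 1 x * q x y * q y 1 = 1" unfolding U_def .
    have inv: "q 1 y * q y 1 = 1" "q x 1 * q 1 x = 1" using qinv by blast+
    show ?thesis by (rule alg2[OF e inv])
  next
    case False
    then have "x = 1 \<or> y = 1 \<or> x = y" by auto
    moreover have "q x x = 1" "q 1 1 = 1" using qd by blast+
    moreover have "q 1 x * q x 1 = 1" using qinv by blast
    ultimately show ?thesis by (auto simp: mult.commute)
  qed
  then show ?thesis by blast
qed



lemma alg3: fixes x1 x2 x3 y1 y2 y3 a b c :: complex
  assumes "x1*y2 = a*(x2*y1)" "x2*y3 = b*(x3*y2)" "x3*y1 = c*(x1*y3)"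
    "x1 \<noteq> 0" "x2 \<noteq> 0" "x3 \<noteq> 0" "y1 \<noteq> 0" "y2 \<noteq> 0" "y3 \<noteq> 0"
  shows "a*b*c = 1"
proof -
  have "(a*b*c - 1) * (x1*x2*x3*(y1*y2*y3)) = 0" using assms(1-3) by algebra
  then show ?thesis using assms(4-9) by simp
qed

lemma alg4: fixes a0 a1 a2 a3 b Q :: complex
  assumes "a0 * a1 * a2 * a3 + (a0*(Q^0*b))*(a1*(Q^1*b))*(a2*(Q^2*b))*(a3*(Q^3*b)) = 0"
    "a0 \<noteq> 0" "a1 \<noteq> 0" "a2 \<noteq> 0" "a3 \<noteq> 0" "Q^4 = 1"
  shows "b^4 = -(Q^2)"
proof -
  have "(a0*a1*a2*a3) * (1 + Q^2 * (Q^4) * b^4) = 0" using assms(1) by algebra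
  then have "1 + Q^2 * b^4 = 0" using assms(2-6) by simp
  then show ?thesis using assms(6) by algebra
qed

definition Pairs :: "(4 \<times> 4) set" where "Pairs = {(1,2),(1,3),(1,4),(2,3),(2,4),(3,4)}"

lemma d4: "(1::4) \<noteq> 2" "(1::4) \<noteq> 3" "(1::4) \<noteq> 4" "(2::4) \<noteq> 3" "(2::4) \<noteq> 4" "(3::4) \<noteq> 4"
  by simp_all

lemma pairs_card: "card Pairs = 6" unfolding Pairs_def by (simp add: d4)
lemma pairs_finite: "finite Pairs" unfolding Pairs_def by simp
lemma pairs_neq: "(i,j) \<in> Pairs \<Longrightarrow> i \<noteq> j" unfolding Pairs_def using d4 by auto
lemma pairs_asym: "(i,j) \<in> Pairs \<Longrightarrow> (j,i) \<notin> Pairs"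
  unfolding Pairs_def by (simp only: insert_iff empty_iff prod.inject; elim disjE conjE; simp add: d4 d4[symmetric])
lemma pairs_tot: "i \<noteq> j \<Longrightarrow> (i,j) \<in> Pairs \<or> (j,i) \<in> Pairs"
  unfolding Pairs_def using exhaust_4[of i] exhaust_4[of j] d4 by auto

definition seqv :: "(4 \<Rightarrow> 4 \<Rightarrow> complex) \<Rightarrow> 4 \<Rightarrow> 4 \<Rightarrow> complex \<Rightarrow> nat \<Rightarrow> cvec4" where
  "seqv q i j b n = (\<chi> k. if k = i then 1 else if k = j then q i j ^ n * b else 0)"

lemma seqv_co: "seqv q i j b n $ k = (if k = i then 1 else if k = j then q i j ^ n * b else 0)"
  by (simp add: seqv_def)

definition DB :: "(4 \<Rightarrow> 4 \<Rightarrow> complex) \<Rightarrow> ((4 \<times> 4) \<times> complex) set" where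
  "DB q = Sigma Pairs (\<lambda>p. {b. b^4 = -((q (fst p) (snd p))^2)})"

definition GB :: "(4 \<Rightarrow> 4 \<Rightarrow> complex) \<Rightarrow> ((4 \<times> 4) \<times> complex) \<Rightarrow> (nat \<Rightarrow> cvec4 set)" where
  "GB q x = (\<lambda>n. proj_class (seqv q (fst (fst x)) (snd (fst x)) (snd x) n))"

lemma roots_card: assumes "(a::complex)^4 = 1" shows "card {b::complex. b^4 = -(a^2)} = 4" "finite {b::complex. b^4 = -(a^2)}"
proof -
  have "-(a^2) \<noteq> 0" using assms by auto
  then show c: "card {b::complex. b^4 = -(a^2)} = 4" by (intro card_nth_roots) auto
  then show "finite {b::complex. b^4 = -(a^2)}" using card.infinite by fastforce
qed

lemma card_DB: assumes q4: "\<forall>i j. q i j ^ 4 = 1" shows "finite (DB q)" "card (DB q) = 24"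
proof -
  have fin: "\<forall>p\<in>Pairs. finite {b. b^4 = -((q (fst p) (snd p))^2)}" using roots_card q4 by blast
  then show "finite (DB q)" unfolding DB_def using pairs_finite by (intro finite_SigmaI) auto
  have "card (DB q) = (\<Sum>p\<in>Pairs. card {b. b^4 = -((q (fst p) (snd p))^2)})"
    unfolding DB_def using pairs_finite fin by (rule card_SigmaI)
  also have "\<dots> = (\<Sum>p\<in>Pairs. 4)" by (rule sum.cong[OF refl]) (use roots_card q4 in blast)
  also have "\<dots> = 24" using pairs_card by simp
  finally show "card (DB q) = 24" .
qed

lemma sum2: assumes "i \<noteq> j" "\<forall>k. k \<noteq> i \<and> k \<noteq> j \<longrightarrow> f k = 0" shows "sum f (UNIV::4 set) = f i + f j"
proof -
  have "sum f UNIV = sum f {i,j}" by (rule sum.mono_neutral_right) (use assms in auto)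
  then show ?thesis using assms(1) by simp
qed

lemma sum1: assumes "\<forall>k. k \<noteq> i \<longrightarrow> f k = 0" shows "sum f (UNIV::4 set) = f i"
proof -
  have "sum f UNIV = sum f {i}" by (rule sum.mono_neutral_right) (use assms in auto)
  then show ?thesis by simp
qed

lemma seqv_ps:
  fixes q :: "4 \<Rightarrow> 4 \<Rightarrow> complex"
  assumes q4: "\<forall>i j. q i j ^ 4 = 1" and qd: "\<forall>i. q i i = 1" and qinv: "\<forall>i j. q i j * q j i = 1"
    and ij: "i \<noteq> j" and b: "b^4 = -((q i j)^2)"
  shows "point_seq q (seqv q i j b)"
  unfolding point_seq_def
proof (intro conjI allI)
  fix n
  have "seqv q i j b n $ i = 1" by (simp add: seqv_co)
  then show "seqv q i j b n \<noteq> 0" by (metis one_neq_zero zero_index)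
next
  fix n i' j'
  have inv: "q j i * q i j = 1" using qinv by blast
  have qii: "q i' i' = 1" using qd by blast
  show "seqv q i j b n $ i' * seqv q i j b (Suc n) $ j' - q i' j' * (seqv q i j b n $ j' * seqv q i j b (Suc n) $ i') = 0"
  proof (cases "i' = j'")
    case True then show ?thesis using qii by simp
  next
    case False
    show ?thesis
    proof (cases "i' = i \<and> j' = j")
      case True then show ?thesis using ij by (simp add: seqv_co)
    next
      case F1: False
      show ?thesis
      proof (cases "i' = j \<and> j' = i")
        case True
        then have "seqv q i j b n $ i' * seqv q i j b (Suc n) $ j' - q i' j' * (seqv q i j b n $ j' * seqv q i j b (Suc n) $ i')
            = q i j ^ n * b * (1 - q j i * q i j)" using ij by (simp add: seqv_co algebra_simps)
        then show ?thesis using inv by simp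
      next
        case F2: False
        have "i' \<notin> {i,j} \<or> j' \<notin> {i,j}" using False F1 F2 by auto
        then show ?thesis by (auto simp: seqv_co)
      qed
    qed
  qed
next
  fix n
  let ?f = "\<lambda>k. seqv q i j b n $ k * seqv q i j b (n + 1) $ k * seqv q i j b (n + 2) $ k * seqv q i j b (n + 3) $ k"
  have "sum ?f UNIV = ?f i + ?f j" by (rule sum2[OF ij]) (simp add: seqv_co)
  also have "?f i = 1" by (simp add: seqv_co)
  also have "?f j = (q i j ^ n * q i j ^ (n+1) * q i j ^ (n+2) * q i j ^ (n+3)) * b ^ 4"
    using ij by (simp only: seqv_co if_False if_True refl ij[symmetric] quart_term)
  also have "\<dots> = q i j ^ 2 * b ^ 4" using pow4_prod q4 by simp
  also have "\<dots> = - (q i j ^ 4)" using b by (simp add: power_add[symmetric])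
  finally show "sum ?f UNIV = 0" using q4 by simp
qed



lemma GB_in:
  fixes q :: "4 \<Rightarrow> 4 \<Rightarrow> complex"
  assumes q4: "\<forall>i j. q i j ^ 4 = 1" and qd: "\<forall>i. q i i = 1" and qinv: "\<forall>i j. q i j * q j i = 1"
    and x: "x \<in> DB q"
  shows "GB q x \<in> Hilb1 q"
proof -
  obtain i j b where xe: "x = ((i,j),b)" by (metis prod.collapse)
  have p: "(i,j) \<in> Pairs" and b: "b^4 = -((q i j)^2)" using x unfolding xe DB_def by auto
  have ps: "point_seq q (seqv q i j b)" by (rule seqv_ps[OF q4 qd qinv pairs_neq[OF p] b])
  show ?thesis unfolding Hilb1_def xe GB_def
    by (rule CollectI, rule exI[of _ "seqv q i j b"]) (simp add: ps)
qed

lemma GB_inj: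
  fixes q :: "4 \<Rightarrow> 4 \<Rightarrow> complex"
  assumes q4: "\<forall>i j. q i j ^ 4 = 1"
  shows "inj_on (GB q) (DB q)"
proof (rule inj_onI)
  fix x y assume x: "x \<in> DB q" and y: "y \<in> DB q" and e: "GB q x = GB q y"
  obtain i j b where xe: "x = ((i,j),b)" by (metis prod.collapse)
  obtain i' j' b' where ye: "y = ((i',j'),b')" by (metis prod.collapse)
  have p: "(i,j) \<in> Pairs" and b: "b^4 = -((q i j)^2)" using x unfolding xe DB_def by auto
  have p': "(i',j') \<in> Pairs" and b': "b'^4 = -((q i' j')^2)" using y unfolding ye DB_def by auto
  have "q i j \<noteq> 0" "q i' j' \<noteq> 0" using q4 nz4 by blast+
  then have bnz: "b \<noteq> 0" and bnz': "b' \<noteq> 0" using b b' by auto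
  have ij: "i \<noteq> j" and ij': "i' \<noteq> j'" using pairs_neq p p' by auto
  have "GB q x 0 = GB q y 0" using e by simp
  then have "proj_class (seqv q i j b 0) = proj_class (seqv q i' j' b' 0)" unfolding GB_def xe ye by simp
  then obtain c where c: "c \<noteq> 0" "seqv q i' j' b' 0 = c *s seqv q i j b 0" using proj_class_eqD by blast
  have co: "seqv q i' j' b' 0 $ k = c * seqv q i j b 0 $ k" for k using c(2) by simp
  have "seqv q i j b 0 $ i' \<noteq> 0"
  proof
    assume "seqv q i j b 0 $ i' = 0"
    then have "seqv q i' j' b' 0 $ i' = 0" using co[of i'] by simp
    then show False by (simp add: seqv_co)
  qed
  then have i'm: "i' = i \<or> i' = j" by (auto simp: seqv_co split: if_splits)
  have "seqv q i j b 0 $ j' \<noteq> 0"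
  proof
    assume "seqv q i j b 0 $ j' = 0"
    then have "seqv q i' j' b' 0 $ j' = 0" using co[of j'] by simp
    then show False using ij' bnz' by (simp add: seqv_co)
  qed
  then have j'm: "j' = i \<or> j' = j" by (auto simp: seqv_co split: if_splits)
  have "i' = i \<and> j' = j"
  proof (rule ccontr)
    assume "\<not> (i' = i \<and> j' = j)"
    then have "i' = j \<and> j' = i" using i'm j'm ij' by auto
    then show False using pairs_asym[OF p] p' by simp
  qed
  then have ii: "i' = i" "j' = j" by auto
  have "c = 1" using co[of i] ii by (simp add: seqv_co)
  then have "b' = b" using co[of j] ii ij by (simp add: seqv_co)
  then show "x = y" using xe ye ii by simp
qed

lemma main_B:
  fixes q :: "4 \<Rightarrow> 4 \<Rightarrow> complex"
  assumes q4: "\<forall>i j. q i j ^ 4 = 1"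
    and ps: "point_seq q \<xi>" and ij: "i \<noteq> j" and nzi: "\<xi> 0 $ i \<noteq> 0" and nzj: "\<xi> 0 $ j \<noteq> 0"
    and oth: "\<forall>k. k \<noteq> i \<and> k \<noteq> j \<longrightarrow> \<xi> 0 $ k = 0"
  shows "(\<lambda>n. proj_class (\<xi> n)) = (\<lambda>n. proj_class (seqv q i j (\<xi> 0 $ j / \<xi> 0 $ i) n))"
    and "(\<xi> 0 $ j / \<xi> 0 $ i)^4 = -((q i j)^2)"
proof -
  define b where "b = \<xi> 0 $ j / \<xi> 0 $ i"
  have nzn: "\<xi> n $ i \<noteq> 0" for n using supp_const[OF ps, of n i] nzi by blast
  have cj: "\<xi> n $ j = \<xi> n $ i * (q i j ^ n * b)" for n
  proof -
    have "\<xi> n $ j = q i j ^ n * (\<xi> 0 $ j / \<xi> 0 $ i) * \<xi> n $ i" by (rule formula[OF ps nzi])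
    also have "\<dots> = \<xi> n $ i * (q i j ^ n * b)" by (simp add: b_def)
    finally show ?thesis .
  qed
  have ck: "\<xi> n $ k = 0" if "k \<noteq> i" "k \<noteq> j" for n k
    using supp_const[OF ps, of n k] oth that by blast
  have vec: "\<xi> n = \<xi> n $ i *s seqv q i j b n" for n
  proof -
    have "\<xi> n $ k = (\<xi> n $ i *s seqv q i j b n) $ k" for k
    proof (cases "k = i")
      case True then show ?thesis by (simp add: seqv_co)
    next
      case F: False
      show ?thesis
      proof (cases "k = j")
        case True then show ?thesis using F cj[of n] by (simp add: seqv_co)
      next
        case False then show ?thesis using F ck[of k n] by (simp add: seqv_co)
      qed
    qed
    then show ?thesis by (subst vec_eq_iff) blast
  qed
  show "(\<lambda>n. proj_class (\<xi> n)) = (\<lambda>n. proj_class (seqv q i j (\<xi> 0 $ j / \<xi> 0 $ i) n))"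
  proof
    fix n
    have "proj_class (\<xi> n) = proj_class (\<xi> n $ i *s seqv q i j b n)" using vec[of n] by simp
    also have "\<dots> = proj_class (seqv q i j b n)" by (rule proj_class_scale[OF nzn])
    finally show "proj_class (\<xi> n) = proj_class (seqv q i j (\<xi> 0 $ j / \<xi> 0 $ i) n)" by (simp add: b_def)
  qed
  let ?f = "\<lambda>k. \<xi> 0 $ k * \<xi> 1 $ k * \<xi> 2 $ k * \<xi> 3 $ k"
  have "sum ?f UNIV = ?f i + ?f j" by (rule sum2[OF ij]) (simp add: oth)
  moreover have "sum ?f UNIV = 0" using ps_quart[OF ps, of 0] unfolding add_0 .
  ultimately have "?f i + ?f j = 0" by simp
  then have "\<xi> 0 $ i * \<xi> 1 $ i * \<xi> 2 $ i * \<xi> 3 $ i +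
      (\<xi> 0 $ i * (q i j ^ 0 * b)) * (\<xi> 1 $ i * (q i j ^ 1 * b)) * (\<xi> 2 $ i * (q i j ^ 2 * b)) * (\<xi> 3 $ i * (q i j ^ 3 * b)) = 0"
    unfolding cj[of 0, symmetric] cj[of 1, symmetric] cj[of 2, symmetric] cj[of 3, symmetric] .
  then have "b^4 = -((q i j)^2)" by (rule alg4[OF _ nzn nzn nzn nzn]) (use q4 in blast)
  then show "(\<xi> 0 $ j / \<xi> 0 $ i)^4 = -((q i j)^2)" by (simp add: b_def)
qed



lemma Hilb_sub:
  fixes q :: "4 \<Rightarrow> 4 \<Rightarrow> complex"
  assumes q4: "\<forall>i j. q i j ^ 4 = 1"
    and incons: "\<forall>i j k. distinct [i,j,k] \<longrightarrow> \<not> U q i j k"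
  shows "Hilb1 q \<subseteq> GB q ` DB q"
proof
  fix P assume "P \<in> Hilb1 q"
  then obtain \<xi> where ps: "point_seq q \<xi>" and Pn: "\<forall>n. P n = proj_class (\<xi> n)"
    unfolding Hilb1_def by blast
  have Pe: "P = (\<lambda>n. proj_class (\<xi> n))" using Pn by auto
  obtain i where nzi: "\<xi> 0 $ i \<noteq> 0" using ps_nz[OF ps, of 0] exists_nz by blast
  have nzn: "\<xi> n $ k \<noteq> 0" if "\<xi> 0 $ k \<noteq> 0" for n k using supp_const[OF ps, of n k] that by blast
  have "\<exists>j. j \<noteq> i \<and> \<xi> 0 $ j \<noteq> 0"
  proof (rule ccontr)
    assume "\<not> (\<exists>j. j \<noteq> i \<and> \<xi> 0 $ j \<noteq> 0)"
    then have oth: "\<forall>k. k \<noteq> i \<longrightarrow> \<xi> 0 $ k * \<xi> 1 $ k * \<xi> 2 $ k * \<xi> 3 $ k = 0" by auto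
    have "(\<Sum>k\<in>UNIV. \<xi> 0 $ k * \<xi> 1 $ k * \<xi> 2 $ k * \<xi> 3 $ k) = \<xi> 0 $ i * \<xi> 1 $ i * \<xi> 2 $ i * \<xi> 3 $ i"
      by (rule sum1[OF oth])
    moreover have "(\<Sum>k\<in>UNIV. \<xi> 0 $ k * \<xi> 1 $ k * \<xi> 2 $ k * \<xi> 3 $ k) = 0"
      using ps_quart[OF ps, of 0] unfolding add_0 .
    moreover have "\<xi> 0 $ i * \<xi> 1 $ i * \<xi> 2 $ i * \<xi> 3 $ i \<noteq> 0" using nzn[OF nzi] nzi by simp
    ultimately show False by simp
  qed
  then obtain j where ij: "i \<noteq> j" and nzj: "\<xi> 0 $ j \<noteq> 0" by (metis (full_types))
  have oth: "\<forall>k. k \<noteq> i \<and> k \<noteq> j \<longrightarrow> \<xi> 0 $ k = 0"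
  proof (intro allI impI, rule ccontr)
    fix k assume k: "k \<noteq> i \<and> k \<noteq> j" and nzk: "\<xi> 0 $ k \<noteq> 0"
    have "q i j * q j k * q k i = 1"
      by (rule alg3[OF ps_rel[OF ps, of 0 i j] ps_rel[OF ps, of 0 j k] ps_rel[OF ps, of 0 k i]
            nzi nzj nzk nzn[OF nzi] nzn[OF nzj] nzn[OF nzk]])
    then have "U q i j k" unfolding U_def .
    moreover have "distinct [i,j,k]" using ij k by auto
    ultimately show False using incons by blast
  qed
  have oth': "\<forall>k. k \<noteq> j \<and> k \<noteq> i \<longrightarrow> \<xi> 0 $ k = 0" using oth by blast
  show "P \<in> GB q ` DB q"
  proof (cases "(i,j) \<in> Pairs")
    case True
    note m = main_B[OF q4 ps ij nzi nzj oth]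
    let ?x = "((i,j), \<xi> 0 $ j / \<xi> 0 $ i)"
    have "?x \<in> DB q" unfolding DB_def using True m(2) by simp
    moreover have "P = GB q ?x" unfolding Pe GB_def using m(1) by simp
    ultimately show ?thesis by blast
  next
    case False
    then have True: "(j,i) \<in> Pairs" using pairs_tot[OF ij] by blast
    note m = main_B[OF q4 ps ij[symmetric] nzj nzi oth']
    let ?x = "((j,i), \<xi> 0 $ i / \<xi> 0 $ j)"
    have "?x \<in> DB q" unfolding DB_def using True m(2) by simp
    moreover have "P = GB q ?x" unfolding Pe GB_def using m(1) by simp
    ultimately show ?thesis by blast
  qed
qed

theorem proposition3p4:
  fixes q :: "4 \<Rightarrow> 4 \<Rightarrow> complex"
  assumes "\<forall>i j. q i j ^ 4 = 1"
    and "\<forall>i. q i i = 1"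
    and "\<forall>i j. q i j * q j i = 1"
    and "\<forall>j j'. (\<Prod>i\<in>UNIV. q i j) = (\<Prod>i\<in>UNIV. q i j')"
  shows "(\<exists>c. smooth_quartic c \<and> inj_on (\<lambda>P. P 0) (Hilb1 q) \<and>
              (\<lambda>P. P 0) ` Hilb1 q = quartic_zero_set c)
         \<or> (finite (Hilb1 q) \<and> card (Hilb1 q) = 24)"
proof (cases "\<forall>i j. q i j = q 1 j * q i 1")
  case True
  have "\<forall>k. q 1 k ^ 2 \<noteq> 0" using assms(1) nz4 by simp
  then have "smooth_quartic (cA (\<lambda>k. q 1 k ^ 2))" by (rule smooth_cA)
  moreover have "(\<lambda>P. P 0) ` Hilb1 q = quartic_zero_set (cA (\<lambda>k. q 1 k ^ 2))"
    by (rule caseA[OF assms(1-3) True])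
  ultimately show ?thesis using inj_hilb by blast
next
  case False
  then have incons: "\<forall>i j k. distinct [i,j,k] \<longrightarrow> \<not> U q i j k" using dich[OF assms] by blast
  have sub1: "GB q ` DB q \<subseteq> Hilb1 q" using GB_in[OF assms(1-3)] by blast
  have "GB q ` DB q = Hilb1 q" using sub1 Hilb_sub[OF assms(1) incons] by (rule equalityI)
  then have bij: "bij_betw (GB q) (DB q) (Hilb1 q)" using GB_inj[OF assms(1)] unfolding bij_betw_def by blast
  have "finite (Hilb1 q)" using bij card_DB[OF assms(1)] bij_betw_finite by blast
  moreover have "card (Hilb1 q) = 24" using bij_betw_same_card[OF bij] card_DB[OF assms(1)] by simp
  ultimately show ?thesis by blast
qed

end
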